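(* Let $W\le W'\le S_d$ with $|W':W|=2$, let $\lambda\in P_d$, and let $a\ne a_1$ be $W$-orbits in $T_\lambda$ contained in the same $W'$-orbit. Then for every $\chi\in X_W$ that separates $a$ from $a_1$ there exists $\nu\in N'$ such that $\nu\chi$ separates $a_1$ from $a$, and for every $\chi\in X_W$ that separates $a_1$ from $a$ there exists $\nu\in N'$ such that $\nu\chi$ separates $a$ from $a_1$.
   Context: Let $d\ge1$, $[d]=\{1,\dots,d\}$, $P_d$ the set of partitions of $d$. For $\lambda=(\lambda_1\ge\dots\ge\lambda_k>0)\in P_d$ a tabloid of shape $\lambda$ is a sequence $A=(A_1,\dots,A_k)$ of pairwise disjoint subsets of $[d]$ with $|A_i|=\lambda_i$; $T_\lambda$ is their set; $S_d$ acts by $\zeta A=(\zeta(A_1),\dots,\zeta(A_k))$. For $U\le S_d$, $T_{\lambda;U}$ is the set of $U$-orbits in $T_\lambda$. $N$ is the normalizer of $W$ in $S_d$ and $N'$ the intersection of $N$ with the normalizer of $W'$. $X_W$ is the group of one-dimensional complex characters of $W$; $N$ acts on it by $(\nu\chi)(\sigma)=\chi(\nu^{-1}\sigma\nu)$. For $\chi\in X_W$, $T_{\lambda;\chi}$ is the set of $W$-orbits $O_W(A)\subseteq T_\lambda$ such that $\chi\equiv1$ on the stabilizer $W_A$ of $A$ in $W$. For $a,b\in T_{\lambda;W}$, $\chi$ separates $a$ from $b$ if $a\in T_{\lambda;\chi}$ and $b\notin T_{\lambda;\chi}$. *)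

theory Defs
  imports "HOL-Combinatorics.Permutations" Complex_Main
begin

type_synonym perm = "nat \<Rightarrow> nat"

definition Sym :: "nat \<Rightarrow> perm set" where
  "Sym d = {p. p permutes {1..d}}"

definition perm_subgroup :: "nat \<Rightarrow> perm set \<Rightarrow> bool" where
  "perm_subgroup d W \<longleftrightarrow> W \<subseteq> Sym d \<and> id \<in> W \<and>
     (\<forall>s\<in>W. \<forall>t\<in>W. s \<circ> t \<in> W) \<and> (\<forall>s\<in>W. inv s \<in> W)"

definition normalizer :: "nat \<Rightarrow> perm set \<Rightarrow> perm set" where
  "normalizer d U = {n \<in> Sym d. (\<lambda>s. n \<circ> s \<circ> inv n) ` U = U}"

definition normalizer2 :: "nat \<Rightarrow> perm set \<Rightarrow> perm set \<Rightarrow> perm set" where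
  "normalizer2 d W W' = normalizer d W \<inter> normalizer d W'"

definition partitions :: "nat \<Rightarrow> nat list set" where
  "partitions d = {lam. sorted_wrt (\<ge>) lam \<and> 0 \<notin> set lam \<and> sum_list lam = d}"

definition tabloids :: "nat \<Rightarrow> nat list \<Rightarrow> nat set list set" where
  "tabloids d lam = {A. length A = length lam \<and>
     (\<forall>i<length A. A ! i \<subseteq> {1..d} \<and> card (A ! i) = lam ! i) \<and>
     (\<forall>i<length A. \<forall>j<length A. i \<noteq> j \<longrightarrow> A ! i \<inter> A ! j = {})}"

definition act :: "perm \<Rightarrow> nat set list \<Rightarrow> nat set list" where
  "act z A = map (\<lambda>X. z ` X) A"

definition orbit :: "perm set \<Rightarrow> nat set list \<Rightarrow> nat set list set" where
  "orbit U A = (\<lambda>s. act s A) ` U"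

definition tab_orbits :: "nat \<Rightarrow> nat list \<Rightarrow> perm set \<Rightarrow> nat set list set set" where
  "tab_orbits d lam U = orbit U ` tabloids d lam"

definition stabilizer :: "perm set \<Rightarrow> nat set list \<Rightarrow> perm set" where
  "stabilizer U A = {s \<in> U. act s A = A}"

text \<open>One-dimensional complex characters of W (homomorphisms W -> C^*),
  extended by 0 outside W so that they are determined by their values on W.\<close>
definition lin_chars :: "perm set \<Rightarrow> (perm \<Rightarrow> complex) set" where
  "lin_chars W = {chi. (\<forall>s\<in>W. \<forall>t\<in>W. chi (s \<circ> t) = chi s * chi t) \<and>
     (\<forall>s\<in>W. chi s \<noteq> 0) \<and> (\<forall>s. s \<notin> W \<longrightarrow> chi s = 0)}"

definition char_act :: "perm \<Rightarrow> (perm \<Rightarrow> complex) \<Rightarrow> (perm \<Rightarrow> complex)" where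
  "char_act n chi = (\<lambda>s. chi (inv n \<circ> s \<circ> n))"

definition tab_chi :: "nat \<Rightarrow> nat list \<Rightarrow> perm set \<Rightarrow> (perm \<Rightarrow> complex) \<Rightarrow> nat set list set set" where
  "tab_chi d lam W chi = {orbit W A | A. A \<in> tabloids d lam \<and>
     (\<forall>s\<in>stabilizer W A. chi s = 1)}"

definition separates :: "nat \<Rightarrow> nat list \<Rightarrow> perm set \<Rightarrow> (perm \<Rightarrow> complex) \<Rightarrow>
    nat set list set \<Rightarrow> nat set list set \<Rightarrow> bool" where
  "separates d lam W chi a b \<longleftrightarrow> a \<in> tab_chi d lam W chi \<and> b \<notin> tab_chi d lam W chi"

end

theory Submission
  imports Defs
begin

lemma Sym_inv: "p \<in> Sym d \<Longrightarrow> inv p \<in> Sym d"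
  by (simp add: Sym_def permutes_inv)

lemma Sym_invs: "p \<in> Sym d \<Longrightarrow> inv p (p x) = x" "p \<in> Sym d \<Longrightarrow> p (inv p x) = x"
  by (auto simp: Sym_def permutes_inverses)

lemma Sym_inv_o: "p \<in> Sym d \<Longrightarrow> inv p \<circ> p = id" "p \<in> Sym d \<Longrightarrow> p \<circ> inv p = id"
  by (auto simp: Sym_def permutes_inv_o)

lemma Sym_inv_inv: "p \<in> Sym d \<Longrightarrow> inv (inv p) = p"
  by (simp add: Sym_def permutes_inv_inv)

lemma Sym_inj: "p \<in> Sym d \<Longrightarrow> inj p"
  by (simp add: Sym_def permutes_inj)

lemma sub_Sym: "perm_subgroup d W \<Longrightarrow> w \<in> W \<Longrightarrow> w \<in> Sym d"
  by (auto simp: perm_subgroup_def)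

lemma act_comp: "act (s \<circ> t) A = act s (act t A)"
  by (simp add: act_def image_comp)

lemma act_id: "act id A = A"
  by (simp add: act_def)

lemma act_inv: "p \<in> Sym d \<Longrightarrow> act (inv p) (act p A) = A"
  by (metis act_comp act_id Sym_inv_o(1))

lemma orbit_self: "perm_subgroup d W \<Longrightarrow> A \<in> orbit W A"
  unfolding orbit_def perm_subgroup_def by (metis act_id image_eqI)

lemma orbit_act:
  assumes W: "perm_subgroup d W" and w: "w \<in> W"
  shows "orbit W (act w X) = orbit W X"
proof
  show "orbit W (act w X) \<subseteq> orbit W X"
    using W w by (auto simp: orbit_def perm_subgroup_def act_comp[symmetric])
  show "orbit W X \<subseteq> orbit W (act w X)"
  proof
    fix Y assume "Y \<in> orbit W X"
    then obtain s where s: "s \<in> W" "Y = act s X" by (auto simp: orbit_def)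
    have "s \<circ> inv w \<in> W" using W w s by (auto simp: perm_subgroup_def)
    moreover have "act (s \<circ> inv w) (act w X) = Y"
      using s act_inv[OF sub_Sym[OF W w]] by (simp add: act_comp)
    ultimately show "Y \<in> orbit W (act w X)" unfolding orbit_def by blast
  qed
qed

lemma tabloid_act:
  assumes p: "p \<in> Sym d" and A: "A \<in> tabloids d lam"
  shows "act p A \<in> tabloids d lam"
proof -
  have pp: "p permutes {1..d}" using p by (simp add: Sym_def)
  have inj: "inj p" using pp permutes_inj by blast
  have im: "p ` {1..d} = {1..d}" using pp permutes_image by blast
  have len: "length (act p A) = length lam" using A by (simp add: act_def tabloids_def)
  have i: "act p A ! i \<subseteq> {1..d} \<and> card (act p A ! i) = lam ! i" if "i < length (act p A)" for i
  proof -
    have "i < length A" using that by (simp add: act_def)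
    hence "A ! i \<subseteq> {1..d}" "card (A ! i) = lam ! i" using A by (auto simp: tabloids_def)
    moreover have "act p A ! i = p ` (A ! i)" using \<open>i < length A\<close> by (simp add: act_def)
    ultimately show ?thesis using im card_image[OF inj_on_subset[OF inj]]
      by (metis image_mono subset_UNIV)
  qed
  have j: "act p A ! i \<inter> act p A ! j = {}" if "i < length (act p A)" "j < length (act p A)" "i \<noteq> j" for i j
  proof -
    have "i < length A" "j < length A" using that by (auto simp: act_def)
    hence "A ! i \<inter> A ! j = {}" using A that(3) by (auto simp: tabloids_def)
    moreover have "act p A ! i = p ` (A ! i)" "act p A ! j = p ` (A ! j)"
      using \<open>i < length A\<close> \<open>j < length A\<close> by (auto simp: act_def)
    ultimately show ?thesis using image_Int[OF inj] by (metis image_empty)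
  qed
  show ?thesis unfolding tabloids_def using len i j by blast
qed

lemma L:
  assumes W: "perm_subgroup d W" and t: "t \<in> Sym d"
    and c1: "\<forall>w\<in>W. t \<circ> w \<circ> inv t \<in> W" and c2: "\<forall>w\<in>W. inv t \<circ> w \<circ> t \<in> W"
    and h: "orbit W A \<in> tab_chi d lam W chi"
  shows "orbit W (act t A) \<in> tab_chi d lam W (char_act t chi)"
proof -
  obtain B where B: "orbit W A = orbit W B" "B \<in> tabloids d lam"
    "\<forall>s\<in>stabilizer W B. chi s = 1"
    using h unfolding tab_chi_def by blast
  have "B \<in> orbit W A" using B(1) orbit_self[OF W, of B] by simp
  then obtain w where w: "w \<in> W" "B = act w A" unfolding orbit_def by blast
  have "act (t \<circ> w \<circ> inv t) (act t A) = act t (act w (act (inv t) (act t A)))"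
    by (simp only: act_comp)
  also have "\<dots> = act t B" by (simp only: act_inv[OF t] w(2))
  finally have e0: "act (t \<circ> w \<circ> inv t) (act t A) = act t B" .
  have o: "orbit W (act t B) = orbit W (act t A)"
    using orbit_act[OF W, of "t \<circ> w \<circ> inv t" "act t A"] c1 w(1) e0 by simp
  have tb: "act t B \<in> tabloids d lam" using tabloid_act[OF t B(2)] .
  have st: "\<forall>s\<in>stabilizer W (act t B). char_act t chi s = 1"
  proof
    fix s assume s: "s \<in> stabilizer W (act t B)"
    hence sW: "s \<in> W" and e: "act s (act t B) = act t B" by (auto simp: stabilizer_def)
    have "act (inv t \<circ> s \<circ> t) B = act (inv t) (act s (act t B))"
      by (simp only: act_comp)
    also have "\<dots> = B" by (simp only: e act_inv[OF t])
    finally have "act (inv t \<circ> s \<circ> t) B = B" .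
    moreover have "inv t \<circ> s \<circ> t \<in> W" using c2 sW by blast
    ultimately have "inv t \<circ> s \<circ> t \<in> stabilizer W B" by (simp add: stabilizer_def)
    hence "chi (inv t \<circ> s \<circ> t) = 1" using B(3) by blast
    thus "char_act t chi s = 1" by (simp add: char_act_def)
  qed
  show ?thesis unfolding tab_chi_def
    using o tb st by blast
qed

lemma char_act_inv: "t \<in> Sym d \<Longrightarrow> char_act (inv t) (char_act t chi) = chi"
proof -
  assume t: "t \<in> Sym d"
  have e: "inv t \<circ> (t \<circ> s \<circ> inv t) \<circ> t = s" for s
    by (simp add: fun_eq_iff Sym_invs[OF t])
  show ?thesis unfolding char_act_def Sym_inv_inv[OF t] e ..
qed

lemma coset:
  assumes W: "perm_subgroup d W" and W': "perm_subgroup d W'" and sub: "W \<subseteq> W'"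
    and c: "card W' = 2 * card W" and t: "t \<in> W'" "t \<notin> W"
  shows "W' = W \<union> (\<lambda>w. t \<circ> w) ` W"
proof -
  have fS: "finite (Sym d)" by (simp add: Sym_def finite_permutations)
  have fW: "finite W" using W fS by (auto simp: perm_subgroup_def intro: finite_subset)
  have "card W > 0" using W fW by (auto simp: perm_subgroup_def card_gt_0_iff)
  hence fW': "finite W'" using c by (metis card.infinite mult_is_0 not_less0 zero_neq_numeral
        gr_implies_not0)
  have tS: "t \<in> Sym d" using W' t by (auto simp: perm_subgroup_def)
  have inj: "inj_on (\<lambda>w. t \<circ> w) W"
  proof
    fix x y assume "t \<circ> x = t \<circ> y"
    hence "inv t \<circ> t \<circ> x = inv t \<circ> t \<circ> y" by (simp add: o_assoc[symmetric])
    thus "x = y" using Sym_inv_o[OF tS] by simp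
  qed
  have disj: "W \<inter> (\<lambda>w. t \<circ> w) ` W = {}"
  proof (rule ccontr)
    assume "W \<inter> (\<lambda>w. t \<circ> w) ` W \<noteq> {}"
    then obtain w where w: "w \<in> W" "t \<circ> w \<in> W" by auto
    hence "t \<circ> w \<circ> inv w \<in> W" using W by (auto simp: perm_subgroup_def)
    moreover have "t \<circ> w \<circ> inv w = t" using Sym_inv_o[OF sub_Sym[OF W w(1)]]
      by (simp add: o_assoc[symmetric])
    ultimately show False using t by simp
  qed
  have ss: "W \<union> (\<lambda>w. t \<circ> w) ` W \<subseteq> W'" using sub t W' by (auto simp: perm_subgroup_def)
  have "card (W \<union> (\<lambda>w. t \<circ> w) ` W) = card W + card W"
    using card_Un_disjoint[OF fW finite_imageI[OF fW] disj] card_image[OF inj] by simp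
  hence "card (W \<union> (\<lambda>w. t \<circ> w) ` W) = card W'" using c by simp
  thus ?thesis using card_subset_eq[OF fW' ss] by simp
qed

lemma conj_in:
  assumes W: "perm_subgroup d W" and W': "perm_subgroup d W'" and sub: "W \<subseteq> W'"
    and c: "card W' = 2 * card W" and t: "t \<in> W'" "t \<notin> W" and w: "w \<in> W"
  shows "t \<circ> w \<circ> inv t \<in> W"
proof (rule ccontr)
  assume nin: "t \<circ> w \<circ> inv t \<notin> W"
  have tS: "t \<in> Sym d" using W' t by (auto simp: perm_subgroup_def)
  have "t \<circ> w \<circ> inv t \<in> W'" using W' t sub w by (auto simp: perm_subgroup_def)
  then obtain v where v: "v \<in> W" "t \<circ> w \<circ> inv t = t \<circ> v"
    using coset[OF W W' sub c t] nin by auto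
  have wv: "w \<circ> inv t = v"
  proof
    fix x
    have "t (w (inv t x)) = t (v x)" using v(2) by (metis comp_apply)
    thus "(w \<circ> inv t) x = v x" using Sym_inj[OF tS] by (simp add: inj_eq)
  qed
  have "inv t = inv w \<circ> v"
  proof
    fix x
    show "inv t x = (inv w \<circ> v) x" using wv[symmetric] Sym_invs(1)[OF sub_Sym[OF W w]]
      by simp
  qed
  hence "inv t \<in> W" using W v w by (auto simp: perm_subgroup_def)
  hence "inv (inv t) \<in> W" using W by (auto simp: perm_subgroup_def)
  thus False using Sym_inv_inv[OF tS] t by simp
qed

lemma in_normalizer:
  assumes U: "perm_subgroup d U" and n: "n \<in> Sym d"
    and c1: "\<forall>u\<in>U. n \<circ> u \<circ> inv n \<in> U" and c2: "\<forall>u\<in>U. inv n \<circ> u \<circ> n \<in> U"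
  shows "n \<in> normalizer d U"
proof -
  have "(\<lambda>s. n \<circ> s \<circ> inv n) ` U = U"
  proof
    show "(\<lambda>s. n \<circ> s \<circ> inv n) ` U \<subseteq> U" using c1 by auto
    show "U \<subseteq> (\<lambda>s. n \<circ> s \<circ> inv n) ` U"
    proof
      fix u assume u: "u \<in> U"
      have "u = n \<circ> (inv n \<circ> u \<circ> n) \<circ> inv n"
        by (simp add: fun_eq_iff Sym_invs[OF n])
      thus "u \<in> (\<lambda>s. n \<circ> s \<circ> inv n) ` U" using c2 u by blast
    qed
  qed
  thus ?thesis using n by (simp add: normalizer_def)
qed

lemma sep_swap:
  assumes W: "perm_subgroup d W" and t: "t \<in> Sym d"
    and c1: "\<forall>w\<in>W. t \<circ> w \<circ> inv t \<in> W" and c2: "\<forall>w\<in>W. inv t \<circ> w \<circ> t \<in> W"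
    and A: "a = orbit W A" and A1: "a1 = orbit W A1"
    and e1: "a1 = orbit W (act t A)" and e2: "a = orbit W (act t A1)"
    and s: "separates d lam W chi a a1"
  shows "separates d lam W (char_act t chi) a1 a"
proof -
  have c1': "\<forall>w\<in>W. inv t \<circ> w \<circ> inv (inv t) \<in> W" using c2 Sym_inv_inv[OF t] by simp
  have c2': "\<forall>w\<in>W. inv (inv t) \<circ> w \<circ> inv t \<in> W" using c1 Sym_inv_inv[OF t] by simp
  have "a1 \<in> tab_chi d lam W (char_act t chi)"
    using L[OF W t c1 c2, of A lam chi] s A e1 by (simp add: separates_def)
  moreover have "a \<notin> tab_chi d lam W (char_act t chi)"
  proof
    assume "a \<in> tab_chi d lam W (char_act t chi)"
    hence "orbit W (act (inv t) (act t A1)) \<in> tab_chi d lam W (char_act (inv t) (char_act t chi))"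
      using L[OF W Sym_inv[OF t] c1' c2'] e2 by simp
    hence "a1 \<in> tab_chi d lam W chi" using act_inv[OF t] char_act_inv[OF t] A1 by simp
    thus False using s by (simp add: separates_def)
  qed
  ultimately show ?thesis by (simp add: separates_def)
qed

theorem corollary9p2p2:
  fixes d :: nat and W W' :: "perm set" and lam :: "nat list"
    and a a1 :: "nat set list set"
  assumes "d \<ge> 1"
    and "perm_subgroup d W" and "perm_subgroup d W'" and "W \<subseteq> W'"
    and "card W' = 2 * card W"
    and "lam \<in> partitions d"
    and "a \<in> tab_orbits d lam W" and "a1 \<in> tab_orbits d lam W" and "a \<noteq> a1"
    and "\<exists>c \<in> tab_orbits d lam W'. a \<subseteq> c \<and> a1 \<subseteq> c"
  shows "(\<forall>chi \<in> lin_chars W. separates d lam W chi a a1 \<longrightarrow>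
            (\<exists>n \<in> normalizer2 d W W'. separates d lam W (char_act n chi) a1 a)) \<and>
         (\<forall>chi \<in> lin_chars W. separates d lam W chi a1 a \<longrightarrow>
            (\<exists>n \<in> normalizer2 d W W'. separates d lam W (char_act n chi) a a1))"
proof -
  note W = assms(2) and W' = assms(3) and sub = assms(4) and c = assms(5)
  obtain A where A: "A \<in> tabloids d lam" "a = orbit W A"
    using assms(7) by (auto simp: tab_orbits_def)
  obtain A1 where A1: "A1 \<in> tabloids d lam" "a1 = orbit W A1"
    using assms(8) by (auto simp: tab_orbits_def)
  obtain C where C: "a \<subseteq> orbit W' C" "a1 \<subseteq> orbit W' C"
    using assms(10) by (auto simp: tab_orbits_def)
  have "A \<in> orbit W' C" using C(1) A(2) orbit_self[OF W] by blast
  then obtain g where g: "g \<in> W'" "A = act g C" by (auto simp: orbit_def)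
  have "A1 \<in> orbit W' C" using C(2) A1(2) orbit_self[OF W] by blast
  then obtain h where h: "h \<in> W'" "A1 = act h C" by (auto simp: orbit_def)
  define t where "t = h \<circ> inv g"
  have gS: "g \<in> Sym d" using sub_Sym[OF W' g(1)] .
  have tW': "t \<in> W'" using W' g h by (auto simp: perm_subgroup_def t_def)
  have tS: "t \<in> Sym d" using sub_Sym[OF W' tW'] .
  have tA: "act t A = A1" using g h act_inv[OF gS] by (simp add: t_def act_comp)
  have tnW: "t \<notin> W"
  proof
    assume "t \<in> W"
    hence "a1 = a" using orbit_act[OF W] A A1 tA by metis
    thus False using assms(9) by simp
  qed
  have tinvW: "inv t \<notin> W"
  proof
    assume "inv t \<in> W"
    hence "inv (inv t) \<in> W" using W by (auto simp: perm_subgroup_def)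
    thus False using tnW Sym_inv_inv[OF tS] by simp
  qed
  have tinvW': "inv t \<in> W'" using W' tW' by (auto simp: perm_subgroup_def)
  have c1: "\<forall>w\<in>W. t \<circ> w \<circ> inv t \<in> W" using conj_in[OF W W' sub c tW' tnW] by blast
  have c2: "\<forall>w\<in>W. inv t \<circ> w \<circ> t \<in> W"
    using conj_in[OF W W' sub c tinvW' tinvW] Sym_inv_inv[OF tS] by auto
  have tt: "t \<circ> t \<in> W"
  proof (rule ccontr)
    assume nin: "t \<circ> t \<notin> W"
    have "t \<circ> t \<in> W'" using W' tW' by (auto simp: perm_subgroup_def)
    then obtain v where v: "v \<in> W" "t \<circ> t = t \<circ> v"
      using coset[OF W W' sub c tW' tnW] nin by auto
    have "t = v"
    proof
      fix x
      have "t (t x) = t (v x)" using v(2) by (metis comp_apply)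
      thus "t x = v x" using Sym_inj[OF tS] by (simp add: inj_eq)
    qed
    thus False using v tnW by simp
  qed
  have e2: "a = orbit W (act t A1)"
    using tA[symmetric] A(2) orbit_act[OF W tt] by (simp add: act_comp[symmetric])
  have e1: "a1 = orbit W (act t A)" using tA A1 by simp
  have c1W': "\<forall>w\<in>W'. t \<circ> w \<circ> inv t \<in> W'" using W' tW' tinvW' by (auto simp: perm_subgroup_def)
  have c2W': "\<forall>w\<in>W'. inv t \<circ> w \<circ> t \<in> W'" using W' tW' tinvW' by (auto simp: perm_subgroup_def)
  have tN: "t \<in> normalizer2 d W W'"
    using in_normalizer[OF W tS c1 c2] in_normalizer[OF W' tS c1W' c2W']
    by (simp add: normalizer2_def)
  show ?thesis
  proof (intro conjI ballI impI)
    fix chi assume "separates d lam W chi a a1"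
    thus "\<exists>n \<in> normalizer2 d W W'. separates d lam W (char_act n chi) a1 a"
      using sep_swap[OF W tS c1 c2 A(2) A1(2) e1 e2] tN by blast
  next
    fix chi assume "separates d lam W chi a1 a"
    thus "\<exists>n \<in> normalizer2 d W W'. separates d lam W (char_act n chi) a a1"
      using sep_swap[OF W tS c1 c2 A1(2) A(2) e2 e1] tN by blast
  qed
qed

end
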